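(* Let $H$ be a complex Hilbert space and $\mathcal S(H)$ the set of bounded self-adjoint operators on $H$ with the logical order $\preceq$. If $A,B,C \in \mathcal S(H)$ and $A \preceq C$, $B \preceq C$, then the meet $A \curlywedge B$ and the join $A \curlyvee B$ of $A$ and $B$ in $(\mathcal S(H),\preceq)$ exist, and \[ A \curlywedge B = C(P_A \wedge P_B), \qquad A \curlyvee B = C(P_A \vee P_B). \]
   Context: For $A \in \mathcal S(H)$, $P_A$ denotes the orthogonal projection onto the closure of the range of $A$; $\wedge$ and $\vee$ denote meet and join in the lattice of orthogonal projections (ordered by $P_1 \le P_2$ iff $P_1P_2 = P_1$). The logical order: $A \preceq B$ iff $B = A + D$ for some $D \in \mathcal S(H)$ with $AD = O$; equivalently $A = BP_A$. Juxtaposition denotes operator composition. *)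

theory Defs
  imports "HOL-Analysis.Analysis"
begin

class complex_hilbert = banach +
  fixes scaleC :: "complex \<Rightarrow> 'a \<Rightarrow> 'a" (infixr \<open>*\<^sub>C\<close> 75)
    and cinner :: "'a \<Rightarrow> 'a \<Rightarrow> complex"
  assumes scaleC_add_right: "a *\<^sub>C (x + y) = a *\<^sub>C x + a *\<^sub>C y"
    and scaleC_add_left: "(a + b) *\<^sub>C x = a *\<^sub>C x + b *\<^sub>C x"
    and scaleC_scaleC: "a *\<^sub>C (b *\<^sub>C x) = (a * b) *\<^sub>C x"
    and scaleC_one: "1 *\<^sub>C x = x"
    and scaleR_scaleC: "r *\<^sub>R x = complex_of_real r *\<^sub>C x"
    and cinner_commute: "cinner x y = cnj (cinner y x)"
    and cinner_add_left: "cinner (x + y) z = cinner x z + cinner y z"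
    and cinner_scaleC_left: "cinner (a *\<^sub>C x) y = cnj a * cinner x y"
    and cinner_self_norm: "cinner x x = complex_of_real ((norm x)\<^sup>2)"

text \<open>Non-vacuity: the complex numbers form a complex Hilbert space.\<close>

instantiation complex :: complex_hilbert
begin
definition scaleC_complex :: "complex \<Rightarrow> complex \<Rightarrow> complex" where
  "scaleC_complex a x = a * x"
definition cinner_complex :: "complex \<Rightarrow> complex \<Rightarrow> complex" where
  "cinner_complex x y = cnj x * y"
instance
proof
  fix a b x y z :: complex and r :: real
  show "a *\<^sub>C (x + y) = a *\<^sub>C x + a *\<^sub>C y" by (simp add: scaleC_complex_def distrib_left)
  show "(a + b) *\<^sub>C x = a *\<^sub>C x + b *\<^sub>C x" by (simp add: scaleC_complex_def distrib_right)
  show "a *\<^sub>C (b *\<^sub>C x) = (a * b) *\<^sub>C x" by (simp add: scaleC_complex_def mult.assoc)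
  show "1 *\<^sub>C x = x" by (simp add: scaleC_complex_def)
  show "r *\<^sub>R x = complex_of_real r *\<^sub>C x" by (simp add: scaleC_complex_def scaleR_conv_of_real)
  show "cinner x y = cnj (cinner y x)" by (simp add: cinner_complex_def mult.commute)
  show "cinner (x + y) z = cinner x z + cinner y z" by (simp add: cinner_complex_def distrib_right)
  show "cinner (a *\<^sub>C x) y = cnj a * cinner x y" by (simp add: cinner_complex_def scaleC_complex_def mult.assoc)
  show "cinner x x = complex_of_real ((norm x)\<^sup>2)" by (simp add: cinner_complex_def complex_norm_square mult.commute del: of_real_power)
qed
end

definition bounded_op :: "('a::complex_hilbert \<Rightarrow> 'a) \<Rightarrow> bool" where
  "bounded_op A \<longleftrightarrow>
     (\<forall>x y. A (x + y) = A x + A y) \<and> (\<forall>a x. A (a *\<^sub>C x) = a *\<^sub>C A x) \<and>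
     (\<exists>K. \<forall>x. norm (A x) \<le> norm x * K)"

definition SA :: "('a::complex_hilbert \<Rightarrow> 'a) set" where
  "SA = {A. bounded_op A \<and> (\<forall>x y. cinner (A x) y = cinner x (A y))}"

definition logical_le :: "('a::complex_hilbert \<Rightarrow> 'a) \<Rightarrow> ('a \<Rightarrow> 'a) \<Rightarrow> bool" where
  "logical_le A B \<longleftrightarrow> (\<exists>D \<in> SA. B = (\<lambda>x. A x + D x) \<and> A \<circ> D = (\<lambda>_. 0))"

definition is_proj :: "('a::complex_hilbert \<Rightarrow> 'a) \<Rightarrow> bool" where
  "is_proj P \<longleftrightarrow> P \<in> SA \<and> P \<circ> P = P"

definition proj_le :: "('a::complex_hilbert \<Rightarrow> 'a) \<Rightarrow> ('a \<Rightarrow> 'a) \<Rightarrow> bool" where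
  "proj_le P Q \<longleftrightarrow> P \<circ> Q = P"

definition range_proj :: "('a::complex_hilbert \<Rightarrow> 'a) \<Rightarrow> ('a \<Rightarrow> 'a)" where
  "range_proj A = (THE P. is_proj P \<and> range P = closure (range A))"

definition proj_meet :: "('a::complex_hilbert \<Rightarrow> 'a) \<Rightarrow> ('a \<Rightarrow> 'a) \<Rightarrow> ('a \<Rightarrow> 'a)" where
  "proj_meet P Q = (THE R. is_proj R \<and> proj_le R P \<and> proj_le R Q \<and>
     (\<forall>S. is_proj S \<and> proj_le S P \<and> proj_le S Q \<longrightarrow> proj_le S R))"

definition proj_join :: "('a::complex_hilbert \<Rightarrow> 'a) \<Rightarrow> ('a \<Rightarrow> 'a) \<Rightarrow> ('a \<Rightarrow> 'a)" where
  "proj_join P Q = (THE R. is_proj R \<and> proj_le P R \<and> proj_le Q R \<and>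
     (\<forall>S. is_proj S \<and> proj_le P S \<and> proj_le Q S \<longrightarrow> proj_le R S))"

definition is_logical_meet :: "('a::complex_hilbert \<Rightarrow> 'a) \<Rightarrow> ('a \<Rightarrow> 'a) \<Rightarrow> ('a \<Rightarrow> 'a) \<Rightarrow> bool" where
  "is_logical_meet A B M \<longleftrightarrow> M \<in> SA \<and> logical_le M A \<and> logical_le M B \<and>
     (\<forall>N \<in> SA. logical_le N A \<and> logical_le N B \<longrightarrow> logical_le N M)"

definition is_logical_join :: "('a::complex_hilbert \<Rightarrow> 'a) \<Rightarrow> ('a \<Rightarrow> 'a) \<Rightarrow> ('a \<Rightarrow> 'a) \<Rightarrow> bool" where
  "is_logical_join A B J \<longleftrightarrow> J \<in> SA \<and> logical_le A J \<and> logical_le B J \<and>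
     (\<forall>N \<in> SA. logical_le A N \<and> logical_le B N \<longrightarrow> logical_le J N)"

end

theory Submission
  imports Defs
begin


abbreviation ci where "ci \<equiv> cinner"

lemma scaleC_zero_right[simp]: "a *\<^sub>C (0::'a::complex_hilbert) = 0"
  using scaleC_add_right[of a "0::'a" 0] by simp
lemma scaleC_minus_right: "a *\<^sub>C (- x::'a::complex_hilbert) = - (a *\<^sub>C x)"
proof -
  have "a *\<^sub>C x + a *\<^sub>C (-x) = 0" using scaleC_add_right[of a x "-x"] by simp
  then show ?thesis by (metis minus_unique)
qed
lemma scaleC_diff_right: "a *\<^sub>C (x - y::'a::complex_hilbert) = a *\<^sub>C x - a *\<^sub>C y"
  using scaleC_add_right[of a x "-y"] by (simp add: scaleC_minus_right)
lemma scaleC_zero_left[simp]: "0 *\<^sub>C (x::'a::complex_hilbert) = 0"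
  using scaleR_scaleC[of 0 x] by simp
lemma scaleC_minus1: "(-1) *\<^sub>C (x::'a::complex_hilbert) = - x"
  using scaleR_scaleC[of "-1" x] by simp
lemma scaleC_of_real: "complex_of_real r *\<^sub>C (x::'a::complex_hilbert) = r *\<^sub>R x"
  using scaleR_scaleC[of r x] by simp

lemma ci_add_right: "ci (x::'a::complex_hilbert) (y + z) = ci x y + ci x z"
  by (metis cinner_add_left cinner_commute complex_cnj_add)
lemma ci_scaleC_right: "ci (x::'a::complex_hilbert) (a *\<^sub>C y) = a * ci x y"
  by (metis cinner_scaleC_left cinner_commute complex_cnj_cnj complex_cnj_mult)
lemma ci_zero_left[simp]: "ci (0::'a::complex_hilbert) y = 0"
  using cinner_add_left[of "0::'a" 0 y] by simp
lemma ci_zero_right[simp]: "ci (x::'a::complex_hilbert) 0 = 0"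
  using ci_add_right[of x "0::'a" 0] by simp
lemma ci_minus_left: "ci (- x::'a::complex_hilbert) y = - ci x y"
proof -
  have "ci x y + ci (-x) y = 0" using cinner_add_left[of x "-x" y] by simp
  then show ?thesis by (metis minus_unique)
qed
lemma ci_minus_right: "ci (x::'a::complex_hilbert) (- y) = - ci x y"
proof -
  have "ci x y + ci x (-y) = 0" using ci_add_right[of x y "-y"] by simp
  then show ?thesis by (metis minus_unique)
qed
lemma ci_diff_left: "ci (x - y::'a::complex_hilbert) z = ci x z - ci y z"
  using cinner_add_left[of x "-y" z] by (simp add: ci_minus_left)
lemma ci_diff_right: "ci (x::'a::complex_hilbert) (y - z) = ci x y - ci x z"
  using ci_add_right[of x y "-z"] by (simp add: ci_minus_right)
lemma ci_self_eq_0: "ci (x::'a::complex_hilbert) x = 0 \<longleftrightarrow> x = 0"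
  by (simp add: cinner_self_norm)
lemma ci_ext: "(\<And>z. ci z (x::'a::complex_hilbert) = ci z y) \<Longrightarrow> x = y"
  by (metis ci_diff_right ci_self_eq_0 diff_self eq_iff_diff_eq_0)
lemma ci_ext_left: "(\<And>z. ci (x::'a::complex_hilbert) z = ci y z) \<Longrightarrow> x = y"
  by (metis ci_diff_left ci_self_eq_0 diff_self eq_iff_diff_eq_0)

lemma norm_scaleC: "norm (a *\<^sub>C (x::'a::complex_hilbert)) = cmod a * norm x"
proof -
  have "complex_of_real ((norm (a *\<^sub>C x))\<^sup>2) = cnj a * (a * complex_of_real ((norm x)\<^sup>2))"
    by (metis cinner_self_norm cinner_scaleC_left ci_scaleC_right)
  also have "\<dots> = complex_of_real ((cmod a * norm x)\<^sup>2)"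
  proof -
    have "cnj a * a = complex_of_real ((cmod a)\<^sup>2)"
      by (simp add: complex_norm_square mult.commute del: of_real_power)
    then show ?thesis by (simp add: power_mult_distrib mult.assoc[symmetric] del: of_real_power)
  qed
  finally have "(norm (a *\<^sub>C x))\<^sup>2 = (cmod a * norm x)\<^sup>2" using of_real_eq_iff by blast
  then show ?thesis by (simp add: power2_eq_iff_nonneg)
qed

lemma nas1: "ci (x+y) (x+y) = ci x x + ci y y + (ci x y + cnj (ci x y))" for x y :: "'a::complex_hilbert"
  using cinner_commute[of y x] by (simp add: cinner_add_left ci_add_right)
lemma nas2: "(norm (x+y))\<^sup>2 = Re (ci (x+y) (x+y))" for x y :: "'a::complex_hilbert"
  by (simp only: cinner_self_norm Re_complex_of_real)
lemma nas3: "Re (ci x x + ci y y + (ci x y + cnj (ci x y))) = Re (ci x x) + Re (ci y y) + 2 * Re (ci x y)" for x y :: "'a::complex_hilbert"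
  by simp
lemma nas4: "Re (ci x x) = (norm x)\<^sup>2" for x :: "'a::complex_hilbert"
  by (simp only: cinner_self_norm Re_complex_of_real)
lemma norm_add_sq: "(norm (x + y::'a::complex_hilbert))\<^sup>2 = (norm x)\<^sup>2 + (norm y)\<^sup>2 + 2 * Re (ci x y)"
  by (simp only: nas2 nas1 nas3 nas4)

lemma norm_diff_sq: "(norm (x - y::'a::complex_hilbert))\<^sup>2 = (norm x)\<^sup>2 + (norm y)\<^sup>2 - 2 * Re (ci x y)"
  using norm_add_sq[of x "-y"] by (simp add: ci_minus_right)


definition sadj :: "('a::complex_hilbert \<Rightarrow> 'a) \<Rightarrow> bool" where
  "sadj T \<longleftrightarrow> (\<forall>x y. ci (T x) y = ci x (T y))"

lemma SA_iff: "A \<in> SA \<longleftrightarrow> bounded_op A \<and> sadj A"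
  by (simp add: SA_def sadj_def)

lemma bop_add: "bounded_op A \<Longrightarrow> A (x + y) = A x + A y" by (simp add: bounded_op_def)
lemma bop_scaleC: "bounded_op A \<Longrightarrow> A (a *\<^sub>C x) = a *\<^sub>C A x" by (simp add: bounded_op_def)
lemma bop_linear: assumes "bounded_op A" shows "bounded_linear A"
proof -
  obtain K where K: "\<And>x. norm (A x) \<le> norm x * K" using assms by (auto simp: bounded_op_def)
  show ?thesis
  proof (rule bounded_linear_intro[of _ K])
    show "A (x + y) = A x + A y" for x y using assms by (simp add: bop_add)
    show "A (r *\<^sub>R x) = r *\<^sub>R A x" for r x
      using bop_scaleC[OF assms, of "complex_of_real r" x] by (simp add: scaleC_of_real)
    show "norm (A x) \<le> norm x * K" for x by (rule K)
  qed
qed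
lemma bop_0: "bounded_op A \<Longrightarrow> A 0 = 0" using bop_add[of A 0 0] by simp
lemma bop_diff: "bounded_op A \<Longrightarrow> A (x - y) = A x - A y"
  using bop_add[of A "x - y" y] by (simp add: eq_diff_eq)
lemma bop_minus: "bounded_op A \<Longrightarrow> A (- x) = - A x"
  using bop_diff[of A 0 x] bop_0[of A] by simp
lemma bop_cont: "bounded_op A \<Longrightarrow> continuous_on UNIV A"
  using bop_linear linear_continuous_on by blast

lemma bop_comp: assumes "bounded_op A" "bounded_op B" shows "bounded_op (A \<circ> B)"
proof -
  obtain K where K: "\<And>x. norm (A x) \<le> norm x * K" using assms by (auto simp: bounded_op_def)
  obtain L where L: "\<And>x. norm (B x) \<le> norm x * L" using assms by (auto simp: bounded_op_def)
  have "norm (A (B x)) \<le> norm x * (\<bar>L\<bar> * \<bar>K\<bar>)" for x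
  proof -
    have k: "norm (B x) * K \<le> norm (B x) * \<bar>K\<bar>"
      by (intro mult_left_mono) auto
    have l: "norm (B x) \<le> norm x * \<bar>L\<bar>"
      using L[of x] mult_left_mono[of L "\<bar>L\<bar>" "norm x"] by force
    have "norm (A (B x)) \<le> norm (B x) * \<bar>K\<bar>" using K[of "B x"] k by linarith
    also have "\<dots> \<le> (norm x * \<bar>L\<bar>) * \<bar>K\<bar>"
      using l by (intro mult_right_mono) auto
    finally show ?thesis by (simp add: mult.assoc)
  qed
  then have b: "\<forall>x. norm ((A \<circ> B) x) \<le> norm x * (\<bar>L\<bar> * \<bar>K\<bar>)" by simp
  have a: "\<forall>x y. (A \<circ> B) (x + y) = (A \<circ> B) x + (A \<circ> B) y"
    using bop_add[OF assms(1)] bop_add[OF assms(2)] by simp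
  have c: "\<forall>a x. (A \<circ> B) (a *\<^sub>C x) = a *\<^sub>C (A \<circ> B) x"
    using bop_scaleC[OF assms(1)] bop_scaleC[OF assms(2)] by simp
  show ?thesis unfolding bounded_op_def using a b c by blast
qed

lemma bop_diff_op: assumes "bounded_op A" "bounded_op B" shows "bounded_op (\<lambda>x. A x - B x)"
proof -
  have "bounded_linear (\<lambda>x. A x - B x)" using assms bop_linear bounded_linear_sub by blast
  then obtain K where b: "\<forall>x. norm (A x - B x) \<le> norm x * K" using bounded_linear.bounded by blast
  have a: "\<forall>x y. A (x + y) - B (x + y) = (A x - B x) + (A y - B y)"
    using bop_add[OF assms(1)] bop_add[OF assms(2)] by simp
  have c: "\<forall>a x. A (a *\<^sub>C x) - B (a *\<^sub>C x) = a *\<^sub>C (A x - B x)"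
    using bop_scaleC[OF assms(1)] bop_scaleC[OF assms(2)] by (simp add: scaleC_diff_right)
  show ?thesis unfolding bounded_op_def using a b c by blast
qed

lemma bop_id: "bounded_op (\<lambda>x. x)"
  unfolding bounded_op_def by (auto intro: exI[of _ 1])

lemma sadj_diff: "sadj A \<Longrightarrow> sadj B \<Longrightarrow> sadj (\<lambda>x. A x - B x)"
  by (simp add: sadj_def ci_diff_left ci_diff_right)
lemma sadj_id: "sadj (\<lambda>x. x)" by (simp add: sadj_def)

lemma adj_comp_eq: assumes "sadj S" "sadj T" "sadj R" "S \<circ> T = R" shows "T \<circ> S = R"
proof
  fix x
  show "(T \<circ> S) x = R x"
  proof (rule ci_ext_left)
    fix y
    have "ci (T (S x)) y = ci x (S (T y))" using assms(1,2) by (simp add: sadj_def)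
    also have "\<dots> = ci x (R y)" using assms(4) by (metis comp_apply)
    also have "\<dots> = ci (R x) y" using assms(3) by (simp add: sadj_def)
    finally show "ci ((T \<circ> S) x) y = ci (R x) y" by simp
  qed
qed

lemma sadj_comp: "sadj S \<Longrightarrow> sadj T \<Longrightarrow> S \<circ> T = T \<circ> S \<Longrightarrow> sadj (S \<circ> T)"
proof -
  assume a: "sadj S" "sadj T" "S \<circ> T = T \<circ> S"
  show "sadj (S \<circ> T)" unfolding sadj_def
  proof (intro allI)
    fix x y
    have "ci (S (T x)) y = ci x (T (S y))" using a(1,2) by (simp add: sadj_def)
    also have "T (S y) = S (T y)" using a(3) by (metis comp_apply)
    finally show "ci ((S \<circ> T) x) y = ci x ((S \<circ> T) y)" by simp
  qed
qed

lemma SA_comp: "S \<in> SA \<Longrightarrow> T \<in> SA \<Longrightarrow> S \<circ> T = T \<circ> S \<Longrightarrow> S \<circ> T \<in> SA"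
  by (simp add: SA_iff bop_comp sadj_comp)

lemma sadj_zero_sq: assumes "sadj D" "\<And>x. D (D x) = 0" shows "D = (\<lambda>_. 0)"
proof
  fix x
  have "ci (D x) (D x) = 0" using assms by (simp add: sadj_def)
  then show "D x = 0" by (simp add: ci_self_eq_0)
qed

section \<open>Projections\<close>

lemma proj_idem: "is_proj P \<Longrightarrow> P (P x) = P x"
  by (metis comp_apply is_proj_def)
lemma proj_bop: "is_proj P \<Longrightarrow> bounded_op P" by (simp add: is_proj_def SA_iff)
lemma proj_sadj: "is_proj P \<Longrightarrow> sadj P" by (simp add: is_proj_def SA_iff)
lemma proj_range: "is_proj P \<Longrightarrow> range P = {x. P x = x}"
proof -
  assume a: "is_proj P"
  show ?thesis
  proof
    show "range P \<subseteq> {x. P x = x}" using proj_idem[OF a] by auto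
    show "{x. P x = x} \<subseteq> range P" by (auto intro: range_eqI[of _ P, OF sym])
  qed
qed
lemma proj_range_closed: assumes "is_proj P" shows "closed (range P)"
proof -
  have "closed {x. P x = x}"
    using bop_cont[OF proj_bop[OF assms]]
    by (intro closed_Collect_eq continuous_on_id) auto
  then show ?thesis using proj_range[OF assms] by simp
qed
lemma proj_orth: "is_proj P \<Longrightarrow> ci (P z) (x - P x) = 0"
proof -
  assume a: "is_proj P"
  have "ci (P z) (P x) = ci (P (P z)) x" using proj_sadj[OF a] by (simp add: sadj_def)
  then show ?thesis by (simp add: ci_diff_right proj_idem[OF a])
qed

lemma proj_le_comm: "is_proj P \<Longrightarrow> is_proj Q \<Longrightarrow> proj_le P Q \<Longrightarrow> Q \<circ> P = P"
proof -
  assume a: "is_proj P" "is_proj Q" "proj_le P Q"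
  then have "P \<circ> Q = P" by (simp add: proj_le_def)
  then show ?thesis using adj_comp_eq[OF proj_sadj[OF a(1)] proj_sadj[OF a(2)] proj_sadj[OF a(1)]] by simp
qed
lemma proj_le_range: assumes "is_proj P" "is_proj Q"
  shows "proj_le P Q \<longleftrightarrow> range P \<subseteq> range Q"
proof
  assume "proj_le P Q"
  then have "Q \<circ> P = P" using assms proj_le_comm by blast
  then show "range P \<subseteq> range Q" by (auto simp: fun_eq_iff) (metis rangeI)
next
  assume "range P \<subseteq> range Q"
  then have "Q \<circ> P = P" using proj_range[OF assms(2)] by (force simp: fun_eq_iff)
  then show "proj_le P Q" unfolding proj_le_def
    using adj_comp_eq[OF proj_sadj[OF assms(2)] proj_sadj[OF assms(1)] proj_sadj[OF assms(1)]] by blast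
qed
lemma proj_antisym: "is_proj P \<Longrightarrow> is_proj Q \<Longrightarrow> proj_le P Q \<Longrightarrow> proj_le Q P \<Longrightarrow> P = Q"
proof -
  assume a: "is_proj P" "is_proj Q" "proj_le P Q" "proj_le Q P"
  have "Q \<circ> P = P" using proj_le_comm[OF a(1,2,3)] .
  moreover have "Q \<circ> P = Q" using a(4) by (simp add: proj_le_def)
  ultimately show ?thesis by simp
qed
lemma proj_eq_range: "is_proj P \<Longrightarrow> is_proj Q \<Longrightarrow> range P = range Q \<Longrightarrow> P = Q"
  by (simp add: proj_antisym proj_le_range)

lemma proj_invariant_comm:
  assumes "sadj C" "is_proj P" "\<And>x. P x = x \<Longrightarrow> P (C x) = C x"
  shows "C \<circ> P = P \<circ> C"
proof -
  have 1: "C \<circ> P = P \<circ> C \<circ> P"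
    using assms(3) proj_idem[OF assms(2)] by (auto simp: fun_eq_iff)
  have "sadj (P \<circ> C \<circ> P)" using assms(1) proj_sadj[OF assms(2)]
    unfolding sadj_def by simp
  then have "sadj (C \<circ> P)" using 1 by simp
  then show ?thesis using adj_comp_eq[OF assms(1) proj_sadj[OF assms(2)], of "C \<circ> P"] by simp
qed



definition csub :: "'a::complex_hilbert set \<Rightarrow> bool" where
  "csub M \<longleftrightarrow> 0 \<in> M \<and> (\<forall>x\<in>M. \<forall>y\<in>M. x + y \<in> M) \<and> (\<forall>a. \<forall>x\<in>M. a *\<^sub>C x \<in> M)"

lemma csub_add: "csub M \<Longrightarrow> x \<in> M \<Longrightarrow> y \<in> M \<Longrightarrow> x + y \<in> M" by (simp add: csub_def)
lemma csub_scaleC: "csub M \<Longrightarrow> x \<in> M \<Longrightarrow> a *\<^sub>C x \<in> M" by (simp add: csub_def)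
lemma csub_diff: "csub M \<Longrightarrow> x \<in> M \<Longrightarrow> y \<in> M \<Longrightarrow> x - y \<in> M"
  using csub_add[of M x "(-1) *\<^sub>C y"] csub_scaleC[of M y "-1"] by (simp add: scaleC_minus1)
lemma csub_scaleR: "csub M \<Longrightarrow> x \<in> M \<Longrightarrow> r *\<^sub>R x \<in> M"
  using csub_scaleC[of M x "complex_of_real r"] by (simp add: scaleC_of_real)

lemma orth_unique:
  assumes "csub M" "m \<in> M" "m' \<in> M" "\<forall>y\<in>M. ci y (x - m) = 0" "\<forall>y\<in>M. ci y (x - m') = 0"
  shows "m = m'"
proof -
  have d: "m' - m \<in> M" using assms csub_diff by blast
  have "ci (m' - m) (x - m) - ci (m' - m) (x - m') = 0" using assms(4,5) d by simp
  then have "ci (m' - m) (m' - m) = 0" by (simp add: ci_diff_right[symmetric])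
  then show ?thesis by (simp add: ci_self_eq_0)
qed

lemma min_orth:
  assumes "csub M" "m \<in> M" "\<forall>y\<in>M. norm (x - m) \<le> norm (x - y)" "y \<in> M"
  shows "ci y (x - m) = 0"
proof -
  define z where "z = x - m"
  define c where "c = ci z y"
  have "c = 0"
  proof (rule ccontr)
    assume c0: "c \<noteq> 0"
    define n where "n = (norm y)\<^sup>2"
    define s where "s = 1 / (n + 1)"
    define t where "t = complex_of_real s * cnj c"
    have n0: "n \<ge> 0" by (simp add: n_def)
    have s0: "s > 0" using n0 by (simp add: s_def)
    have sn: "s * n < 1" using n0 by (simp add: s_def field_simps)
    have q0: "(cmod c)\<^sup>2 > 0" using c0 by simp
    have mem: "m + t *\<^sub>C y \<in> M" using assms by (simp add: csub_add csub_scaleC)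
    have "(- t) *\<^sub>C y = - (t *\<^sub>C y)"
      using scaleC_scaleC[of "-1" t y] scaleC_minus1[of "t *\<^sub>C y"] by simp
    then have eq: "x - (m + t *\<^sub>C y) = z + (- t) *\<^sub>C y"
      by (simp add: z_def algebra_simps)
    have tc: "t * c = complex_of_real (s * (cmod c)\<^sup>2)"
      by (simp add: t_def complex_norm_square mult.assoc mult.commute del: of_real_power)
    have ct: "cmod t = s * cmod c" using s0 by (simp add: t_def norm_mult)
    have "norm (x - m) \<le> norm (z + (- t) *\<^sub>C y)"
      using assms(3) mem eq by metis
    then have "norm z \<le> norm (z + (- t) *\<^sub>C y)" using z_def by simp
    then have "(norm z)\<^sup>2 \<le> (norm (z + (- t) *\<^sub>C y))\<^sup>2"
      by (intro power_mono) auto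
    also have "\<dots> = (norm z)\<^sup>2 + (s * cmod c)\<^sup>2 * n - 2 * (s * (cmod c)\<^sup>2)"
    proof -
      have "Re (ci z ((- t) *\<^sub>C y)) = - Re (t * c)"
        by (simp add: ci_scaleC_right c_def)
      then show ?thesis using tc ct
        by (simp add: norm_add_sq norm_scaleC n_def power_mult_distrib)
    qed
    finally have "0 \<le> s * (cmod c)\<^sup>2 * (s * n - 2)"
      by (simp add: algebra_simps power2_eq_square)
    moreover have "s * (cmod c)\<^sup>2 * (s * n - 2) < 0"
      using s0 q0 sn by (intro mult_pos_neg) auto
    ultimately show False by simp
  qed
  then have "ci y z = 0" by (metis c_def cinner_commute complex_cnj_zero)
  then show ?thesis by (simp add: z_def)
qed

lemma closest_exists:
  fixes x :: "'a::complex_hilbert"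
  assumes "csub M" "closed M"
  shows "\<exists>m\<in>M. \<forall>y\<in>M. norm (x - m) \<le> norm (x - y)"
proof -
  define S where "S = (\<lambda>m. norm (x - m)) ` M"
  define d where "d = Inf S"
  have ne: "S \<noteq> {}" using assms(1) by (auto simp: S_def csub_def)
  have bdd: "bdd_below S" unfolding S_def by (rule bdd_belowI[of _ 0]) auto
  have dle: "\<forall>y\<in>M. d \<le> norm (x - y)"
    unfolding d_def using bdd by (auto simp: S_def intro: cInf_lower)
  have d0: "0 \<le> d" unfolding d_def using ne by (intro cInf_greatest) (auto simp: S_def)
  have approx: "\<exists>m\<in>M. (norm (x - m))\<^sup>2 < d\<^sup>2 + e" if e: "e > 0" for e
  proof -
    have "sqrt (d\<^sup>2) < sqrt (d\<^sup>2 + e)" using e by (intro real_sqrt_less_mono) simp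
    then have "d < sqrt (d\<^sup>2 + e)" using d0 by simp
    then obtain s where "s \<in> S" "s < sqrt (d\<^sup>2 + e)"
      using cInf_less_iff[OF ne bdd] d_def by auto
    then obtain m where m: "m \<in> M" "norm (x - m) < sqrt (d\<^sup>2 + e)" by (auto simp: S_def)
    then have "(norm (x - m))\<^sup>2 < (sqrt (d\<^sup>2 + e))\<^sup>2" by (intro power_strict_mono) auto
    also have "\<dots> = d\<^sup>2 + e" using e by (intro real_sqrt_pow2) simp
    finally show ?thesis using m by blast
  qed
  have "\<forall>n. \<exists>m. m \<in> M \<and> (norm (x - m))\<^sup>2 < d\<^sup>2 + inverse (real (Suc n))"
  proof
    fix n
    have "0 < inverse (real (Suc n))" by simp
    from approx[OF this] show "\<exists>m. m \<in> M \<and> (norm (x - m))\<^sup>2 < d\<^sup>2 + inverse (real (Suc n))"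
      by blast
  qed
  then have "\<exists>f. \<forall>n. f n \<in> M \<and> (norm (x - f n))\<^sup>2 < d\<^sup>2 + inverse (real (Suc n))"
    by (rule choice)
  then obtain f where f0: "\<forall>n. f n \<in> M \<and> (norm (x - f n))\<^sup>2 < d\<^sup>2 + inverse (real (Suc n))"
    by blast
  have f: "\<And>n. f n \<in> M" "\<And>n. (norm (x - f n))\<^sup>2 < d\<^sup>2 + inverse (real (Suc n))"
    using f0 by auto
  have para: "(norm (a - b))\<^sup>2 \<le> 2 * (norm (x - a))\<^sup>2 + 2 * (norm (x - b))\<^sup>2 - 4 * d\<^sup>2"
    if ab: "a \<in> M" "b \<in> M" for a b
  proof -
    define u where "u = x - a"
    define v where "v = x - b"
    have pl: "(norm (u + v))\<^sup>2 + (norm (u - v))\<^sup>2 = 2 * (norm u)\<^sup>2 + 2 * (norm v)\<^sup>2"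
      by (simp add: norm_add_sq norm_diff_sq)
    define mid where "mid = (1/2) *\<^sub>R (a + b)"
    have "mid \<in> M" using ab assms by (simp add: mid_def csub_scaleR csub_add)
    then have dm: "d \<le> norm (x - mid)" using dle by auto
    have "u + v = 2 *\<^sub>R (x - mid)"
      by (simp add: u_def v_def mid_def scaleR_right_diff_distrib scaleR_right_distrib scaleR_2)
    then have "norm (u + v) = 2 * norm (x - mid)" by simp
    then have "(norm (u + v))\<^sup>2 \<ge> 4 * d\<^sup>2"
      using power_mono[OF dm d0, of 2] by (simp add: power_mult_distrib)
    moreover have "norm (u - v) = norm (a - b)"
      by (simp add: u_def v_def norm_minus_commute)
    ultimately show ?thesis using pl by (simp add: u_def v_def)
  qed
  have cauchy: "Cauchy f"
  proof (rule CauchyI)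
    fix e :: real assume e: "0 < e"
    then have "0 < e\<^sup>2 / 4" by simp
    then obtain N where N: "inverse (real (Suc N)) < e\<^sup>2 / 4" using reals_Archimedean by blast
    show "\<exists>N. \<forall>m\<ge>N. \<forall>n\<ge>N. norm (f m - f n) < e"
    proof (intro exI allI impI)
      fix m n assume mn: "m \<ge> N" "n \<ge> N"
      have im: "inverse (real (Suc m)) \<le> inverse (real (Suc N))" using mn by (simp add: le_imp_inverse_le)
      have inn: "inverse (real (Suc n)) \<le> inverse (real (Suc N))" using mn by (simp add: le_imp_inverse_le)
      have "(norm (f m - f n))\<^sup>2 \<le> 2 * (norm (x - f m))\<^sup>2 + 2 * (norm (x - f n))\<^sup>2 - 4 * d\<^sup>2"
        using para f by auto
      also have "\<dots> < e\<^sup>2" using f(2)[of m] f(2)[of n] im inn N by linarith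
      finally have "(norm (f m - f n))\<^sup>2 < e\<^sup>2" .
      then show "norm (f m - f n) < e" using e by (simp add: power_less_imp_less_base)
    qed
  qed
  then obtain L where L: "f \<longlonglongrightarrow> L" using Cauchy_convergent_iff convergent_def by blast
  have LM: "L \<in> M" using closed_sequentially[OF assms(2)] f(1) L by blast
  have "(norm (x - L))\<^sup>2 \<le> d\<^sup>2"
  proof (rule LIMSEQ_le)
    show "(\<lambda>n. (norm (x - f n))\<^sup>2) \<longlonglongrightarrow> (norm (x - L))\<^sup>2" using L by (intro tendsto_intros)
    show "(\<lambda>n. d\<^sup>2 + inverse (real (Suc n))) \<longlonglongrightarrow> d\<^sup>2"
      using tendsto_add[OF tendsto_const LIMSEQ_inverse_real_of_nat, of "d\<^sup>2"] by simp
    show "\<exists>N. \<forall>n\<ge>N. (norm (x - f n))\<^sup>2 \<le> d\<^sup>2 + inverse (real (Suc n))"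
      by (intro exI[of _ 0] allI impI less_imp_le f(2))
  qed
  then have Ld: "norm (x - L) \<le> d" using d0 by (rule power2_le_imp_le)
  show ?thesis
  proof (rule bexI[of _ L])
    show "L \<in> M" by (rule LM)
    show "\<forall>y\<in>M. norm (x - L) \<le> norm (x - y)"
    proof
      fix y assume "y \<in> M"
      then have "d \<le> norm (x - y)" using dle by blast
      then show "norm (x - L) \<le> norm (x - y)" using Ld by linarith
    qed
  qed
qed

lemma proj_exists:
  fixes M :: "'a::complex_hilbert set"
  assumes "csub M" "closed M"
  shows "\<exists>P. is_proj P \<and> range P = M"
proof -
  have "\<forall>x. \<exists>m. m \<in> M \<and> (\<forall>y\<in>M. ci y (x - m) = 0)"
  proof
    fix x
    obtain m where m: "m \<in> M" "\<forall>y\<in>M. norm (x - m) \<le> norm (x - y)"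
      using closest_exists[OF assms] by blast
    have "\<forall>y\<in>M. ci y (x - m) = 0" using min_orth[OF assms(1) m] by blast
    then show "\<exists>m. m \<in> M \<and> (\<forall>y\<in>M. ci y (x - m) = 0)" using m(1) by blast
  qed
  then have "\<exists>P. \<forall>x. P x \<in> M \<and> (\<forall>y\<in>M. ci y (x - P x) = 0)" by (rule choice)
  then obtain P where P0: "\<forall>x. P x \<in> M \<and> (\<forall>y\<in>M. ci y (x - P x) = 0)" by blast
  have P: "\<And>x. P x \<in> M" "\<And>x. \<forall>y\<in>M. ci y (x - P x) = 0" using P0 by auto
  have uniq: "P x = m" if "m \<in> M" "\<forall>y\<in>M. ci y (x - m) = 0" for x m
    using orth_unique[OF assms(1) P(1) that(1) P(2) that(2)] .
  have fx: "P m = m" if "m \<in> M" for m by (rule uniq) (auto simp: that)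
  have add: "P (x + y) = P x + P y" for x y
  proof (rule uniq)
    show "P x + P y \<in> M" using P assms(1) csub_add by blast
    show "\<forall>z\<in>M. ci z (x + y - (P x + P y)) = 0"
    proof
      fix z assume z: "z \<in> M"
      have eq: "x + y - (P x + P y) = (x - P x) + (y - P y)" by (simp add: algebra_simps)
      have "ci z (x + y - (P x + P y)) = ci z (x - P x) + ci z (y - P y)"
        by (simp only: eq ci_add_right)
      moreover have "ci z (x - P x) = 0" "ci z (y - P y) = 0" using P(2) z by auto
      ultimately show "ci z (x + y - (P x + P y)) = 0" by simp
    qed
  qed
  have scal: "P (a *\<^sub>C x) = a *\<^sub>C P x" for a x
  proof (rule uniq)
    show "a *\<^sub>C P x \<in> M" using P assms(1) csub_scaleC by blast
    show "\<forall>z\<in>M. ci z (a *\<^sub>C x - a *\<^sub>C P x) = 0"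
      using P(2) by (simp add: scaleC_diff_right[symmetric] ci_scaleC_right)
  qed
  have orth: "ci (P z) (x - P x) = 0" for z x using P by blast
  have sa: "ci (P x) y = ci x (P y)" for x y
  proof -
    have "ci (P x) y = ci (P x) (P y) + ci (P x) (y - P y)" by (simp add: ci_diff_right)
    also have "\<dots> = ci (P x) (P y)" using orth by simp
    also have "\<dots> = cnj (ci (P y) (P x))" by (rule cinner_commute)
    also have "ci (P y) (P x) = ci (P y) x" using orth[of y x] by (simp add: ci_diff_right)
    also have "cnj (ci (P y) x) = ci x (P y)" by (metis cinner_commute)
    finally show ?thesis .
  qed
  have bnd: "norm (P x) \<le> norm x * 1" for x
  proof -
    have "(norm x)\<^sup>2 = (norm (P x))\<^sup>2 + (norm (x - P x))\<^sup>2"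
      using norm_add_sq[of "P x" "x - P x"] orth[of x x] by simp
    then have "(norm (P x))\<^sup>2 \<le> (norm x)\<^sup>2" by simp
    then have "norm (P x) \<le> norm x" by (rule power2_le_imp_le) simp
    then show ?thesis by simp
  qed
  have bop: "bounded_op P" unfolding bounded_op_def using add scal bnd by blast
  have "P \<circ> P = P" using fx P(1) by (auto simp: fun_eq_iff)
  then have "is_proj P" unfolding is_proj_def SA_def using bop sa by auto
  moreover have "range P = M" using P(1) fx by (auto intro: range_eqI[of _ P, OF sym])
  ultimately show ?thesis by blast
qed



lemma scaleC_bl: "bounded_linear (\<lambda>x::'a::complex_hilbert. a *\<^sub>C x)"
proof (rule bounded_linear_intro[of _ "cmod a"])
  show "a *\<^sub>C (x + y) = a *\<^sub>C x + a *\<^sub>C y" for x y :: 'a by (rule scaleC_add_right)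
  show "a *\<^sub>C (r *\<^sub>R x) = r *\<^sub>R (a *\<^sub>C x)" for r and x :: 'a
    by (simp add: scaleC_of_real[symmetric] scaleC_scaleC mult.commute)
  show "norm (a *\<^sub>C x) \<le> norm x * cmod a" for x :: 'a by (simp add: norm_scaleC mult.commute)
qed

lemma csub_closure:
  fixes M :: "'a::complex_hilbert set"
  assumes "csub M" shows "csub (closure M)"
  unfolding csub_def
proof (intro conjI ballI allI)
  show "0 \<in> closure M" using assms closure_subset by (auto simp: csub_def)
next
  fix x y assume "x \<in> closure M" "y \<in> closure M"
  then obtain f g where f: "\<forall>n. f n \<in> M" "f \<longlonglongrightarrow> x" and g: "\<forall>n. g n \<in> M" "g \<longlonglongrightarrow> y"
    by (meson closure_sequential)
  have "\<forall>n. f n + g n \<in> M" using f g assms csub_add by blast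
  moreover have "(\<lambda>n. f n + g n) \<longlonglongrightarrow> x + y" using f g by (intro tendsto_add)
  ultimately show "x + y \<in> closure M" by (meson closure_sequential)
next
  fix a and x assume "x \<in> closure M"
  then obtain f where f: "\<forall>n. f n \<in> M" "f \<longlonglongrightarrow> x" by (meson closure_sequential)
  have "\<forall>n. a *\<^sub>C f n \<in> M" using f assms csub_scaleC by blast
  moreover have "(\<lambda>n. a *\<^sub>C f n) \<longlonglongrightarrow> a *\<^sub>C x"
    using bounded_linear.tendsto[OF scaleC_bl f(2)] .
  ultimately show "a *\<^sub>C x \<in> closure M" by (meson closure_sequential)
qed

lemma csub_range: assumes "bounded_op A" shows "csub (range A)"
  unfolding csub_def
proof (intro conjI ballI allI)
  show "0 \<in> range A" using bop_0[OF assms] by (metis rangeI)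
next
  fix x y assume "x \<in> range A" "y \<in> range A"
  then obtain u v where "x = A u" "y = A v" by blast
  then have "x + y = A (u + v)" using bop_add[OF assms] by simp
  then show "x + y \<in> range A" by simp
next
  fix a x assume "x \<in> range A"
  then obtain u where "x = A u" by blast
  then have "a *\<^sub>C x = A (a *\<^sub>C u)" using bop_scaleC[OF assms] by simp
  then show "a *\<^sub>C x \<in> range A" by simp
qed

lemma csub_Int: "csub M \<Longrightarrow> csub N \<Longrightarrow> csub (M \<inter> N)"
  unfolding csub_def by blast

lemma range_proj_props:
  fixes A :: "'a::complex_hilbert \<Rightarrow> 'a"
  assumes "bounded_op A"
  shows "is_proj (range_proj A) \<and> range (range_proj A) = closure (range A)"
proof -
  obtain P where P: "is_proj P" "range P = closure (range A)"
    using proj_exists[OF csub_closure[OF csub_range[OF assms]] closed_closure] by blast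
  have "range_proj A = P"
    unfolding range_proj_def
  proof (rule the_equality)
    show "is_proj P \<and> range P = closure (range A)" using P by blast
    show "Q = P" if "is_proj Q \<and> range Q = closure (range A)" for Q
      using proj_eq_range[of Q P] that P by simp
  qed
  then show ?thesis using P by simp
qed

lemma proj_meet_props:
  fixes P Q :: "'a::complex_hilbert \<Rightarrow> 'a"
  assumes "is_proj P" "is_proj Q"
  shows "is_proj (proj_meet P Q) \<and> range (proj_meet P Q) = range P \<inter> range Q"
proof -
  have cs: "csub (range P \<inter> range Q)"
    using csub_Int csub_range proj_bop assms by blast
  have cl: "closed (range P \<inter> range Q)"
    using proj_range_closed assms by blast
  obtain R where R: "is_proj R" "range R = range P \<inter> range Q"
    using proj_exists[OF cs cl] by blast
  have spec: "is_proj R \<and> proj_le R P \<and> proj_le R Q \<and>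
     (\<forall>S. is_proj S \<and> proj_le S P \<and> proj_le S Q \<longrightarrow> proj_le S R)"
  proof (intro conjI allI impI)
    show "is_proj R" by (rule R(1))
    show "proj_le R P" using proj_le_range[OF R(1) assms(1)] R(2) by blast
    show "proj_le R Q" using proj_le_range[OF R(1) assms(2)] R(2) by blast
    fix S assume S: "is_proj S \<and> proj_le S P \<and> proj_le S Q"
    then have "range S \<subseteq> range P" "range S \<subseteq> range Q"
      using proj_le_range[OF _ assms(1), of S] proj_le_range[OF _ assms(2), of S] by auto
    then show "proj_le S R" using proj_le_range[OF _ R(1), of S] S R(2) by blast
  qed
  have "proj_meet P Q = R"
    unfolding proj_meet_def
  proof (rule the_equality)
    show "is_proj R \<and> proj_le R P \<and> proj_le R Q \<and>
     (\<forall>S. is_proj S \<and> proj_le S P \<and> proj_le S Q \<longrightarrow> proj_le S R)" by (rule spec)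
    fix R' assume R': "is_proj R' \<and> proj_le R' P \<and> proj_le R' Q \<and>
     (\<forall>S. is_proj S \<and> proj_le S P \<and> proj_le S Q \<longrightarrow> proj_le S R')"
    then have "proj_le R' R" using spec by blast
    moreover have "proj_le R R'" using R' spec by blast
    ultimately show "R' = R" using proj_antisym R' R(1) by blast
  qed
  then show ?thesis using R by simp
qed

definition compl :: "('a::complex_hilbert \<Rightarrow> 'a) \<Rightarrow> 'a \<Rightarrow> 'a" where
  "compl P = (\<lambda>x. x - P x)"

lemma compl_compl[simp]: "compl (compl P) = P" by (simp add: compl_def)

lemma proj_compl: assumes "is_proj P" shows "is_proj (compl P)"
proof -
  have b: "bounded_op (compl P)" unfolding compl_def using bop_diff_op[OF bop_id proj_bop[OF assms]] .
  have s: "sadj (compl P)" unfolding compl_def using sadj_diff[OF sadj_id proj_sadj[OF assms]] .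
  have "compl P \<circ> compl P = compl P"
    using bop_diff[OF proj_bop[OF assms]] proj_idem[OF assms] by (simp add: compl_def fun_eq_iff)
  then show ?thesis using b s by (simp add: is_proj_def SA_iff)
qed

lemma proj_le_compl:
  assumes "is_proj P" "is_proj S" "proj_le P S"
  shows "proj_le (compl S) (compl P)"
proof -
  have SP: "S \<circ> P = P" using proj_le_comm assms by blast
  have "(compl S \<circ> compl P) x = compl S x" for x
  proof -
    have "S (x - P x) = S x - P x" using bop_diff[OF proj_bop[OF assms(2)]] SP
      by (metis comp_apply)
    then show ?thesis by (simp add: compl_def)
  qed
  then show ?thesis by (simp add: proj_le_def fun_eq_iff)
qed

lemma proj_le_compl_iff:
  assumes "is_proj P" "is_proj S"
  shows "proj_le (compl S) (compl P) \<longleftrightarrow> proj_le P S"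
  using proj_le_compl[OF assms] proj_le_compl[OF proj_compl[OF assms(2)] proj_compl[OF assms(1)]]
  by auto

lemma proj_join_eq:
  fixes P Q :: "'a::complex_hilbert \<Rightarrow> 'a"
  assumes "is_proj P" "is_proj Q"
  shows "proj_join P Q = compl (proj_meet (compl P) (compl Q))"
proof -
  define E where "E = proj_meet (compl P) (compl Q)"
  have cP: "is_proj (compl P)" and cQ: "is_proj (compl Q)" using proj_compl assms by blast+
  have E: "is_proj E" "range E = range (compl P) \<inter> range (compl Q)"
    using proj_meet_props[OF cP cQ] by (auto simp: E_def)
  have J: "is_proj (compl E)" using proj_compl E(1) .
  have EP: "proj_le E (compl P)" using E proj_le_range[OF E(1) cP] by blast
  have EQ: "proj_le E (compl Q)" using E proj_le_range[OF E(1) cQ] by blast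
  have PJ: "proj_le P (compl E)"
    using proj_le_compl_iff[OF assms(1) J] EP by simp
  have QJ: "proj_le Q (compl E)"
    using proj_le_compl_iff[OF assms(2) J] EQ by simp
  have least: "proj_le (compl E) S" if S: "is_proj S" "proj_le P S" "proj_le Q S" for S
  proof -
    have cS: "is_proj (compl S)" using proj_compl S(1) .
    have "proj_le (compl S) (compl P)" using proj_le_compl[OF assms(1) S(1,2)] .
    moreover have "proj_le (compl S) (compl Q)" using proj_le_compl[OF assms(2) S(1,3)] .
    ultimately have "range (compl S) \<subseteq> range E"
      using E proj_le_range[OF cS cP] proj_le_range[OF cS cQ] by blast
    then have "proj_le (compl S) E" using proj_le_range cS E(1) by blast
    then show ?thesis using proj_le_compl_iff[OF J S(1)] by simp
  qed
  have "proj_join P Q = compl E"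
    unfolding proj_join_def
  proof (rule the_equality)
    show "is_proj (compl E) \<and> proj_le P (compl E) \<and> proj_le Q (compl E) \<and>
     (\<forall>S. is_proj S \<and> proj_le P S \<and> proj_le Q S \<longrightarrow> proj_le (compl E) S)"
      using J PJ QJ least by blast
    fix R assume R: "is_proj R \<and> proj_le P R \<and> proj_le Q R \<and>
     (\<forall>S. is_proj S \<and> proj_le P S \<and> proj_le Q S \<longrightarrow> proj_le R S)"
    then have "proj_le R (compl E)" using J PJ QJ by blast
    moreover have "proj_le (compl E) R" using R least by blast
    ultimately show "R = compl E" using proj_antisym R J by blast
  qed
  then show ?thesis by (simp add: E_def)
qed



lemma pt: assumes "f \<circ> g = h" shows "f (g x) = h x" using fun_cong[OF assms, of x] by simp

lemma ptc: assumes "f \<circ> g = h \<circ> k" shows "f (g x) = h (k x)" using fun_cong[OF assms, of x] by simp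

lemma proj_fix: assumes "is_proj P" "x \<in> range P" shows "P x = x"
proof -
  obtain y where "x = P y" using assms(2) by blast
  then show ?thesis using proj_idem[OF assms(1)] by simp
qed

lemma op_proj_right:
  assumes "X \<in> SA" shows "X \<circ> range_proj X = X"
proof
  fix x
  define P where "P = range_proj X"
  have bX: "bounded_op X" and sX: "sadj X" using assms by (auto simp: SA_iff)
  have P: "is_proj P" "range P = closure (range X)" using range_proj_props[OF bX] by (auto simp: P_def)
  define y where "y = x - P x"
  define w where "w = X (X y)"
  have "w \<in> range X" unfolding w_def by (rule rangeI)
  then have "w \<in> range P" unfolding P(2) by (rule subsetD[OF closure_subset])
  then have Pw: "P w = w" by (rule proj_fix[OF P(1)])
  have "ci (X y) (X y) = ci y w" using sX by (simp add: sadj_def w_def)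
  also have "\<dots> = cnj (ci (P w) y)" using cinner_commute[of y w] Pw by simp
  also have "ci (P w) y = 0" unfolding y_def by (rule proj_orth[OF P(1)])
  finally have "X y = 0" by (simp add: ci_self_eq_0)
  then have "X x = X (P x)" using bop_diff[OF bX] by (simp add: y_def)
  then show "(X \<circ> range_proj X) x = X x" by (simp add: P_def)
qed

lemma le_intro:
  assumes X: "X \<in> SA" and Y: "Y \<in> SA" and Q: "is_proj Q" and c: "Y \<circ> Q = Q \<circ> Y" and e: "X = Y \<circ> Q"
  shows "logical_le X Y"
proof -
  have bX: "bounded_op X" and sX: "sadj X" using X by (auto simp: SA_iff)
  have bY: "bounded_op Y" and sY: "sadj Y" using Y by (auto simp: SA_iff)
  define D where "D = (\<lambda>x. Y x - X x)"
  have DSA: "D \<in> SA" unfolding D_def SA_iff using bop_diff_op[OF bY bX] sadj_diff[OF sY sX] by blast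
  have Yeq: "Y = (\<lambda>x. X x + D x)" by (simp add: D_def)
  have "X (D x) = 0" for x
  proof -
    have Dx: "D x = Y x - Y (Q x)" using e by (simp add: D_def)
    have "Q (D x) = Q (Y x) - Q (Y (Q x))" using Dx bop_diff[OF proj_bop[OF Q]] by simp
    also have "\<dots> = Y (Q x) - Y (Q (Q x))" using ptc[OF c, of x] ptc[OF c, of "Q x"] by simp
    also have "\<dots> = 0" using proj_idem[OF Q] by simp
    finally have "Q (D x) = 0" .
    then show ?thesis using e bop_0[OF bY] by simp
  qed
  then have "X \<circ> D = (\<lambda>_. 0)" by (simp add: fun_eq_iff)
  then show ?thesis unfolding logical_le_def using DSA Yeq by blast
qed

lemma sadj_zero: "sadj (\<lambda>_::'a::complex_hilbert. 0)" by (simp add: sadj_def)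

lemma le_elim:
  assumes X: "X \<in> SA" and Y: "Y \<in> SA" and le: "logical_le X Y"
  shows "X = Y \<circ> range_proj X \<and> range_proj X \<circ> Y = Y \<circ> range_proj X"
proof -
  have bX: "bounded_op X" and sX: "sadj X" using X by (auto simp: SA_iff)
  have bY: "bounded_op Y" and sY: "sadj Y" using Y by (auto simp: SA_iff)
  obtain D where D: "D \<in> SA" "Y = (\<lambda>x. X x + D x)" "X \<circ> D = (\<lambda>_. 0)"
    using le unfolding logical_le_def by blast
  have bD: "bounded_op D" and sD: "sadj D" using D(1) by (auto simp: SA_iff)
  have DX: "D \<circ> X = (\<lambda>_. 0)" using adj_comp_eq[OF sX sD sadj_zero D(3)] .
  define P where "P = range_proj X"
  have P: "is_proj P" "range P = closure (range X)" using range_proj_props[OF bX] by (auto simp: P_def)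
  have cl: "closed {v. D v = 0}"
    using bop_cont[OF bD] by (intro closed_Collect_eq continuous_on_const) auto
  have "range X \<subseteq> {v. D v = 0}" using pt[OF DX] by auto
  then have "closure (range X) \<subseteq> {v. D v = 0}" using cl by (rule closure_minimal)
  then have DP: "D (P x) = 0" for x using P(2) by auto
  have XP: "X (P x) = X x" for x using pt[OF op_proj_right[OF X]] by (simp add: P_def)
  have YP: "Y \<circ> P = X" using DP XP D(2) by (simp add: fun_eq_iff)
  have "P \<circ> Y = X" using adj_comp_eq[OF sY proj_sadj[OF P(1)] sX YP] .
  then show ?thesis using YP by (simp add: P_def)
qed

lemma le_antisym:
  assumes X: "X \<in> SA" and le1: "logical_le X Y" and le2: "logical_le Y X"
  shows "X = Y"
proof -
  have bX: "bounded_op X" using X by (auto simp: SA_iff)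
  obtain D where D: "D \<in> SA" "Y = (\<lambda>x. X x + D x)" "X \<circ> D = (\<lambda>_. 0)"
    using le1 unfolding logical_le_def by blast
  obtain E where E: "E \<in> SA" "X = (\<lambda>x. Y x + E x)" "Y \<circ> E = (\<lambda>_. 0)"
    using le2 unfolding logical_le_def by blast
  have bD: "bounded_op D" and sD: "sadj D" using D(1) by (auto simp: SA_iff)
  have Ex: "E x = - D x" for x
  proof -
    have "X x = Y x + E x" using fun_cong[OF E(2), of x] by simp
    moreover have "Y x = X x + D x" using fun_cong[OF D(2), of x] by simp
    ultimately have "X x = X x + D x + E x" by simp
    then have "D x + E x = 0" by (simp add: add.assoc)
    then have "- D x = E x" by (rule minus_unique)
    then show ?thesis by simp
  qed
  have "D (D x) = 0" for x
  proof -
    have "0 = Y (E x)" using pt[OF E(3)] by simp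
    also have "\<dots> = X (E x) + D (E x)" using D(2) by simp
    also have "\<dots> = - X (D x) - D (D x)" using Ex bop_minus[OF bX] bop_minus[OF bD] by simp
    also have "X (D x) = 0" using pt[OF D(3)] by simp
    finally show ?thesis by simp
  qed
  then have "D = (\<lambda>_. 0)" using sadj_zero_sq[OF sD] by blast
  then show ?thesis using D(2) by simp
qed

lemma meet_comm:
  assumes P: "is_proj P" and Q: "is_proj Q" and T: "sadj T"
    and cP: "T \<circ> P = P \<circ> T" and cQ: "T \<circ> Q = Q \<circ> T"
  shows "T \<circ> proj_meet P Q = proj_meet P Q \<circ> T"
proof -
  have R: "is_proj (proj_meet P Q)" "range (proj_meet P Q) = range P \<inter> range Q"
    using proj_meet_props[OF P Q] by auto
  show ?thesis
  proof (rule proj_invariant_comm[OF T R(1)])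
    fix x assume "proj_meet P Q x = x"
    then have "x \<in> range (proj_meet P Q)" by (blast intro: range_eqI[OF sym])
    then have "x \<in> range P" "x \<in> range Q" using R(2) by auto
    then have "P x = x" "Q x = x" using proj_fix P Q by blast+
    then have "P (T x) = T x" "Q (T x) = T x" using pt[OF cP, of x] pt[OF cQ, of x] by simp_all
    then have "T x \<in> range P \<inter> range Q" by (blast intro: range_eqI[OF sym])
    then show "proj_meet P Q (T x) = T x" using proj_fix[OF R(1)] R(2) by blast
  qed
qed

lemma compl_comm:
  assumes "bounded_op T" "T \<circ> P = P \<circ> T"
  shows "T \<circ> compl P = compl P \<circ> T"
  using bop_diff[OF assms(1)] pt[OF assms(2)] by (simp add: compl_def fun_eq_iff)

lemma join_comm:
  assumes P: "is_proj P" and Q: "is_proj Q" and bT: "bounded_op T" and T: "sadj T"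
    and cP: "T \<circ> P = P \<circ> T" and cQ: "T \<circ> Q = Q \<circ> T"
  shows "T \<circ> compl (proj_meet (compl P) (compl Q)) = compl (proj_meet (compl P) (compl Q)) \<circ> T"
proof -
  have "T \<circ> proj_meet (compl P) (compl Q) = proj_meet (compl P) (compl Q) \<circ> T"
    using meet_comm[OF proj_compl[OF P] proj_compl[OF Q] T compl_comm[OF bT cP] compl_comm[OF bT cQ]] .
  then show ?thesis using compl_comm[OF bT] by blast
qed



theorem corollary3:
  fixes A B C :: "'a::complex_hilbert \<Rightarrow> 'a"
  assumes "A \<in> SA" and "B \<in> SA" and "C \<in> SA"
    and "logical_le A C" and "logical_le B C"
  shows "is_logical_meet A B (C \<circ> proj_meet (range_proj A) (range_proj B))
       \<and> (\<forall>M. is_logical_meet A B M \<longrightarrow> M = C \<circ> proj_meet (range_proj A) (range_proj B))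
       \<and> is_logical_join A B (C \<circ> proj_join (range_proj A) (range_proj B))
       \<and> (\<forall>J. is_logical_join A B J \<longrightarrow> J = C \<circ> proj_join (range_proj A) (range_proj B))"
proof -
  note ASA = assms(1) and BSA = assms(2) and CSA = assms(3)
  have bA: "bounded_op A" and sA: "sadj A" using ASA by (auto simp: SA_iff)
  have bB: "bounded_op B" and sB: "sadj B" using BSA by (auto simp: SA_iff)
  have bC: "bounded_op C" and sC: "sadj C" using CSA by (auto simp: SA_iff)
  define PA where "PA = range_proj A"
  define PB where "PB = range_proj B"
  have PA: "is_proj PA" "range PA = closure (range A)" using range_proj_props[OF bA] by (auto simp: PA_def)
  have PB: "is_proj PB" "range PB = closure (range B)" using range_proj_props[OF bB] by (auto simp: PB_def)
  have hA: "A = C \<circ> PA" "PA \<circ> C = C \<circ> PA" using le_elim[OF ASA CSA assms(4)] by (auto simp: PA_def)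
  have hB: "B = C \<circ> PB" "PB \<circ> C = C \<circ> PB" using le_elim[OF BSA CSA assms(5)] by (auto simp: PB_def)
  have Ax: "A x = C (PA x)" for x using hA(1) by simp
  have Bx: "B x = C (PB x)" for x using hB(1) by simp
  have PAC: "PA (C x) = C (PA x)" for x using ptc[OF hA(2)] .
  have PBC: "PB (C x) = C (PB x)" for x using ptc[OF hB(2)] .

  define R where "R = proj_meet PA PB"
  have R: "is_proj R" "range R = range PA \<inter> range PB" using proj_meet_props[OF PA(1) PB(1)] by (auto simp: R_def)
  have RPA: "proj_le R PA" using proj_le_range[OF R(1) PA(1)] R(2) by blast
  have RPB: "proj_le R PB" using proj_le_range[OF R(1) PB(1)] R(2) by blast
  have PAR: "PA (R x) = R x" for x using pt[OF proj_le_comm[OF R(1) PA(1) RPA]] .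
  have RPAx: "R (PA x) = R x" for x using pt[OF RPA[unfolded proj_le_def]] .
  have PBR: "PB (R x) = R x" for x using pt[OF proj_le_comm[OF R(1) PB(1) RPB]] .
  have RPBx: "R (PB x) = R x" for x using pt[OF RPB[unfolded proj_le_def]] .
  have RC: "C \<circ> R = R \<circ> C"
    unfolding R_def using meet_comm[OF PA(1) PB(1) sC] hA(2) hB(2) by simp
  have RCx: "C (R x) = R (C x)" for x using ptc[OF RC] .
  define M0 where "M0 = C \<circ> R"
  have M0SA: "M0 \<in> SA" unfolding M0_def using SA_comp[OF CSA _ RC] R(1) by (simp add: is_proj_def)
  have M0A: "logical_le M0 A"
  proof (rule le_intro[OF M0SA ASA R(1)])
    show "A \<circ> R = R \<circ> A" by (simp add: fun_eq_iff Ax PAR RPAx RCx[symmetric])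
    show "M0 = A \<circ> R" by (simp add: fun_eq_iff M0_def Ax PAR)
  qed
  have M0B: "logical_le M0 B"
  proof (rule le_intro[OF M0SA BSA R(1)])
    show "B \<circ> R = R \<circ> B" by (simp add: fun_eq_iff Bx PBR RPBx RCx[symmetric])
    show "M0 = B \<circ> R" by (simp add: fun_eq_iff M0_def Bx PBR)
  qed
  have M0great: "logical_le N M0" if N: "N \<in> SA" "logical_le N A" "logical_le N B" for N
  proof -
    have bN: "bounded_op N" and sN: "sadj N" using N(1) by (auto simp: SA_iff)
    define PN where "PN = range_proj N"
    have PN: "is_proj PN" "range PN = closure (range N)" using range_proj_props[OF bN] by (auto simp: PN_def)
    have NA: "N = A \<circ> PN" using le_elim[OF N(1) ASA N(2)] by (simp add: PN_def)
    have NB: "N = B \<circ> PN" using le_elim[OF N(1) BSA N(3)] by (simp add: PN_def)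
    have rNA: "range N \<subseteq> range A"
    proof
      fix y assume "y \<in> range N"
      then obtain u where "y = N u" by blast
      then have "y = A (PN u)" using fun_cong[OF NA, of u] by simp
      then show "y \<in> range A" by (simp only: rangeI)
    qed
    have rNB: "range N \<subseteq> range B"
    proof
      fix y assume "y \<in> range N"
      then obtain u where "y = N u" by blast
      then have "y = B (PN u)" using fun_cong[OF NB, of u] by simp
      then show "y \<in> range B" by (simp only: rangeI)
    qed
    have "range PN \<subseteq> range PA" using closure_mono[OF rNA] PN(2) PA(2) by simp
    moreover have "range PN \<subseteq> range PB" using closure_mono[OF rNB] PN(2) PB(2) by simp
    ultimately have "range PN \<subseteq> range R" using R(2) by blast
    then have "proj_le PN R" using proj_le_range[OF PN(1) R(1)] by blast
    then have RPN: "R (PN x) = PN x" for x using pt[OF proj_le_comm[OF PN(1) R(1)]] by blast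
    have PAPN: "PA (PN x) = PN x" for x using PAR[of "PN x"] RPN[of x] by simp
    have Nx: "N x = C (PN x)" for x
    proof -
      have "N x = A (PN x)" using fun_cong[OF NA, of x] by simp
      also have "\<dots> = C (PN x)" using Ax[of "PN x"] PAPN[of x] by simp
      finally show ?thesis .
    qed
    have MPN: "M0 \<circ> PN = N"
    proof
      fix x
      have "(M0 \<circ> PN) x = C (R (PN x))" by (simp add: M0_def)
      also have "\<dots> = N x" using RPN[of x] Nx[of x] by simp
      finally show "(M0 \<circ> PN) x = N x" .
    qed
    have sM0: "sadj M0" using M0SA by (simp add: SA_iff)
    have PNM: "PN \<circ> M0 = N" using adj_comp_eq[OF sM0 proj_sadj[OF PN(1)] sN MPN] .
    have c1: "M0 \<circ> PN = PN \<circ> M0" using MPN PNM by simp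
    have c2: "N = M0 \<circ> PN" using MPN by simp
    show ?thesis using le_intro[OF N(1) M0SA PN(1) c1 c2] .
  qed
  have meet: "is_logical_meet A B M0"
    unfolding is_logical_meet_def using M0SA M0A M0B M0great by blast
  have meet_uniq: "M = M0" if "is_logical_meet A B M" for M
  proof -
    have M: "M \<in> SA" "logical_le M A" "logical_le M B"
      "\<forall>N\<in>SA. logical_le N A \<and> logical_le N B \<longrightarrow> logical_le N M"
      using that unfolding is_logical_meet_def by blast+
    have "logical_le M M0" using M0great M(1-3) by blast
    moreover have "logical_le M0 M" using M(4) M0SA M0A M0B by blast
    ultimately show ?thesis using le_antisym M(1) by blast
  qed

  define E where "E = proj_meet (compl PA) (compl PB)"
  define S where "S = compl E"
  have cPA: "is_proj (compl PA)" and cPB: "is_proj (compl PB)" using proj_compl PA(1) PB(1) by blast+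
  have E: "is_proj E" "range E = range (compl PA) \<inter> range (compl PB)"
    using proj_meet_props[OF cPA cPB] by (auto simp: E_def)
  have S: "is_proj S" using proj_compl[OF E(1)] by (simp add: S_def)
  have Sjoin: "proj_join PA PB = S" using proj_join_eq[OF PA(1) PB(1)] by (simp add: S_def E_def)
  have "proj_le E (compl PA)" using proj_le_range[OF E(1) cPA] E(2) by blast
  then have PAS: "proj_le PA S" using proj_le_compl_iff[OF PA(1) S] by (simp add: S_def)
  have "proj_le E (compl PB)" using proj_le_range[OF E(1) cPB] E(2) by blast
  then have PBS: "proj_le PB S" using proj_le_compl_iff[OF PB(1) S] by (simp add: S_def)
  have SPAx: "S (PA x) = PA x" for x using pt[OF proj_le_comm[OF PA(1) S PAS]] .
  have PASx: "PA (S x) = PA x" for x using pt[OF PAS[unfolded proj_le_def]] .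
  have SPBx: "S (PB x) = PB x" for x using pt[OF proj_le_comm[OF PB(1) S PBS]] .
  have PBSx: "PB (S x) = PB x" for x using pt[OF PBS[unfolded proj_le_def]] .
  have commS: "T \<circ> S = S \<circ> T" if "bounded_op T" "sadj T" "T \<circ> PA = PA \<circ> T" "T \<circ> PB = PB \<circ> T" for T
    using join_comm[OF PA(1) PB(1) that] by (simp add: S_def E_def)
  have SC: "C \<circ> S = S \<circ> C" using commS[OF bC sC] hA(2) hB(2) by simp
  have SCx: "C (S x) = S (C x)" for x using ptc[OF SC] .
  define J0 where "J0 = C \<circ> S"
  have J0SA: "J0 \<in> SA" unfolding J0_def using SA_comp[OF CSA _ SC] S by (simp add: is_proj_def)
  have AJ0: "logical_le A J0"
  proof (rule le_intro[OF ASA J0SA PA(1)])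
    show "J0 \<circ> PA = PA \<circ> J0" by (simp add: fun_eq_iff J0_def SPAx PAC PASx)
    show "A = J0 \<circ> PA" by (simp add: fun_eq_iff J0_def SPAx Ax)
  qed
  have BJ0: "logical_le B J0"
  proof (rule le_intro[OF BSA J0SA PB(1)])
    show "J0 \<circ> PB = PB \<circ> J0" by (simp add: fun_eq_iff J0_def SPBx PBC PBSx)
    show "B = J0 \<circ> PB" by (simp add: fun_eq_iff J0_def SPBx Bx)
  qed
  have J0least: "logical_le J0 N" if N: "N \<in> SA" "logical_le A N" "logical_le B N" for N
  proof -
    have bN: "bounded_op N" and sN: "sadj N" using N(1) by (auto simp: SA_iff)
    have eA: "A = N \<circ> PA" "PA \<circ> N = N \<circ> PA" using le_elim[OF ASA N(1) N(2)] by (auto simp: PA_def)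
    have eB: "B = N \<circ> PB" "PB \<circ> N = N \<circ> PB" using le_elim[OF BSA N(1) N(3)] by (auto simp: PB_def)
    have NS: "N \<circ> S = S \<circ> N" using commS[OF bN sN] eA(2) eB(2) by simp
    define X where "X = (\<lambda>x. N x - C x)"
    have sX: "sadj X" unfolding X_def using sadj_diff[OF sN sC] .
    have "X \<circ> PA = (\<lambda>_. 0)"
    proof
      fix x
      have "N (PA x) = C (PA x)" using fun_cong[OF eA(1), of x] Ax[of x] by simp
      then show "(X \<circ> PA) x = 0" by (simp add: X_def)
    qed
    then have PAX: "PA \<circ> X = (\<lambda>_. 0)" using adj_comp_eq[OF sX proj_sadj[OF PA(1)] sadj_zero] by blast
    have "X \<circ> PB = (\<lambda>_. 0)"
    proof
      fix x
      have "N (PB x) = C (PB x)" using fun_cong[OF eB(1), of x] Bx[of x] by simp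
      then show "(X \<circ> PB) x = 0" by (simp add: X_def)
    qed
    then have PBX: "PB \<circ> X = (\<lambda>_. 0)" using adj_comp_eq[OF sX proj_sadj[OF PB(1)] sadj_zero] by blast
    have SX: "S (X x) = 0" for x
    proof -
      have "compl PA (X x) = X x" using pt[OF PAX, of x] by (simp add: compl_def)
      then have "X x \<in> range (compl PA)" using rangeI[of "compl PA" "X x"] by simp
      moreover have "compl PB (X x) = X x" using pt[OF PBX, of x] by (simp add: compl_def)
      then have "X x \<in> range (compl PB)" by (metis rangeI)
      ultimately have "X x \<in> range E" using E(2) by blast
      then have "E (X x) = X x" using proj_fix[OF E(1)] by blast
      then show ?thesis by (simp add: S_def compl_def)
    qed
    have "N (S x) = C (S x)" for x
    proof -
      have "S (X x) = S (N x) - S (C x)" using bop_diff[OF proj_bop[OF S]] by (simp add: X_def)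
      also have "\<dots> = N (S x) - C (S x)" using ptc[OF NS, of x] SCx by simp
      finally show ?thesis using SX by simp
    qed
    then have J0eq: "J0 = N \<circ> S" by (simp add: fun_eq_iff J0_def)
    show ?thesis using le_intro[OF J0SA N(1) S NS J0eq] .
  qed
  have join: "is_logical_join A B J0"
    unfolding is_logical_join_def using J0SA AJ0 BJ0 J0least by blast
  have join_uniq: "J = J0" if "is_logical_join A B J" for J
  proof -
    have J: "J \<in> SA" "logical_le A J" "logical_le B J"
      "\<forall>N\<in>SA. logical_le A N \<and> logical_le B N \<longrightarrow> logical_le J N"
      using that unfolding is_logical_join_def by blast+
    have "logical_le J0 J" using J0least J(1-3) by blast
    moreover have "logical_le J J0" using J(4) J0SA AJ0 BJ0 by blast
    ultimately show ?thesis using le_antisym J(1) by blast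
  qed
  have e1: "C \<circ> proj_meet (range_proj A) (range_proj B) = M0" by (simp only: M0_def R_def PA_def PB_def)
  have e2: "C \<circ> proj_join (range_proj A) (range_proj B) = J0"
    using Sjoin unfolding J0_def PA_def PB_def by simp
  show ?thesis unfolding e1 e2 using meet meet_uniq join join_uniq by blast
qed



end
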